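(* Let $G=(V,E)$ be a finite simple graph and let $T\geq1$ be an integer. For each zero forcing set $C$ that is the initial set of a zero forcing game in $\mathcal{Z}(G,T)$, there is a feasible solution $(s,x,y,z)$ of the Infection Model $\mathrm{IM}(G,T)$ such that $|C|=\sum_{v\in V}s_v$ and $z=\mathrm{pt}(G,C)\leq T$.
   Context: Zero forcing: $n=|V|$, $N(u)$ is the neighborhood of $u$. Under the standard color change rule, a filled vertex $u$ can force a non-filled vertex $v$ if $v$ is the only non-filled neighbor of $u$. A zero forcing game on $G$ with initial set $C\subseteq V$ consists of sets $C^{(0)}=C^{[0]}=C$, sets $C^{(t)}$ (vertices forced at time step $t$) with $C^{[t]}=C^{[t-1]}\cup C^{(t)}$ for $t\geq1$, and a collection $\phi(C)$ of forces $u\to v$, such that every vertex lies in exactly one set $C^{(t)}$, and each $v\in C^{(t)}$ with $t\geq 1$ is forced by exactly one neighbor $u$ (recorded as $u\to v$ in $\phi(C)$) such that $u$ and all neighbors of $u$ other than $v$ lie in $C^{[t-1]}$. The closure of $C$ is the set of filled vertices once no more forces are possible; $C$ is a zero forcing set if its closure is $V$. The propagation time $\mathrm{pt}(G,C)$ is the smallest $t^*$ with $C^{[t^*]}=V$ when at each time step all possible forces are applied simultaneously (i.e. $C^{(t)}$ is the set of all $v\notin C^{[t-1]}$ for which some $u\in C^{[t-1]}$ has $v$ as its unique neighbor outside $C^{[t-1]}$), and $\mathrm{pt}(G,C)=\infty$ if $C$ is not a zero forcing set. $\mathcal{Z}(G,T)$ denotes the family of all zero forcing games on $G$ whose initial set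 is a zero forcing set and which use at most $T$ time steps. Infection Model: let $A$ be the set of arcs containing both $(u,v)$ and $(v,u)$ for each edge $\{u,v\}\in E$. The model $\mathrm{IM}(G,T)$ has variables $s_v\in\{0,1\}$ and $x_v\in\{0,1,\dots,T\}$ for $v\in V$, $y_a\in\{0,1\}$ for $a\in A$, and $z\in\{0,1,\dots,T\}$, subject to: (i) $s_v+\sum_{a=(u,v)\in A}y_a=1$ for all $v\in V$; (ii) $x_u-x_v+(T+1)y_a\leq T$ for all $a=(u,v)\in A$; (iii) $x_w-x_v+(T+1)y_a\leq T$ for all $a=(u,v)\in A$ and $w\in N(u)\setminus\{v\}$; (iv) $x_v-z\leq 0$ for all $v\in V$. A feasible solution is one satisfying all these constraints. *)

theory Defs
  imports Main "HOL-Library.Extended_Nat"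
begin

definition simple_graph :: "'a set \<Rightarrow> ('a \<Rightarrow> 'a \<Rightarrow> bool) \<Rightarrow> bool" where
  "simple_graph V E \<longleftrightarrow> finite V \<and> (\<forall>u v. E u v \<longrightarrow> u \<in> V \<and> v \<in> V)
     \<and> (\<forall>u v. E u v \<longrightarrow> E v u) \<and> (\<forall>u. \<not> E u u)"

definition nbhd :: "'a set \<Rightarrow> ('a \<Rightarrow> 'a \<Rightarrow> bool) \<Rightarrow> 'a \<Rightarrow> 'a set" where
  "nbhd V E u = {w \<in> V. E u w}"

definition force_step :: "'a set \<Rightarrow> ('a \<Rightarrow> 'a \<Rightarrow> bool) \<Rightarrow> 'a set \<Rightarrow> 'a set" where
  "force_step V E S = S \<union> {v \<in> V - S. \<exists>u \<in> S. E u v \<and> nbhd V E u - S = {v}}"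

definition zf_closure :: "'a set \<Rightarrow> ('a \<Rightarrow> 'a \<Rightarrow> bool) \<Rightarrow> 'a set \<Rightarrow> 'a set" where
  "zf_closure V E C = (\<Union>t. (force_step V E ^^ t) C)"

definition zero_forcing_set :: "'a set \<Rightarrow> ('a \<Rightarrow> 'a \<Rightarrow> bool) \<Rightarrow> 'a set \<Rightarrow> bool" where
  "zero_forcing_set V E C \<longleftrightarrow> C \<subseteq> V \<and> zf_closure V E C = V"

definition pt :: "'a set \<Rightarrow> ('a \<Rightarrow> 'a \<Rightarrow> bool) \<Rightarrow> 'a set \<Rightarrow> enat" where
  "pt V E C = (if zero_forcing_set V E C
      then enat (LEAST t. (force_step V E ^^ t) C = V) else \<infinity>)"

text \<open>A zero forcing game with initial set C: Cs t is the set C^(t) of vertices forced at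
  time t, and phi is the set of forces (u,v) meaning u \<rightarrow> v.\<close>
definition filled_upto :: "(nat \<Rightarrow> 'a set) \<Rightarrow> nat \<Rightarrow> 'a set" where
  "filled_upto Cs t = (\<Union>i\<le>t. Cs i)"

definition zf_game :: "'a set \<Rightarrow> ('a \<Rightarrow> 'a \<Rightarrow> bool) \<Rightarrow> 'a set \<Rightarrow> (nat \<Rightarrow> 'a set)
    \<Rightarrow> ('a \<times> 'a) set \<Rightarrow> bool" where
  "zf_game V E C Cs phi \<longleftrightarrow>
     Cs 0 = C \<and> (\<forall>t. Cs t \<subseteq> V)
     \<and> (\<forall>v \<in> V. \<exists>!t. v \<in> Cs t)
     \<and> (\<forall>u v. (u, v) \<in> phi \<longrightarrow> (\<exists>t\<ge>1. v \<in> Cs t))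
     \<and> (\<forall>t\<ge>1. \<forall>v \<in> Cs t. (\<exists>!u. (u, v) \<in> phi) \<and>
          (\<forall>u. (u, v) \<in> phi \<longrightarrow> E u v \<and> u \<in> filled_upto Cs (t - 1)
               \<and> nbhd V E u - {v} \<subseteq> filled_upto Cs (t - 1)))"

definition in_Z :: "'a set \<Rightarrow> ('a \<Rightarrow> 'a \<Rightarrow> bool) \<Rightarrow> nat \<Rightarrow> 'a set \<Rightarrow> (nat \<Rightarrow> 'a set)
    \<Rightarrow> ('a \<times> 'a) set \<Rightarrow> bool" where
  "in_Z V E T C Cs phi \<longleftrightarrow> zf_game V E C Cs phi \<and> zero_forcing_set V E C
     \<and> filled_upto Cs T = V"

definition arcs :: "'a set \<Rightarrow> ('a \<Rightarrow> 'a \<Rightarrow> bool) \<Rightarrow> ('a \<times> 'a) set" where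
  "arcs V E = {(u, v). u \<in> V \<and> v \<in> V \<and> E u v}"

definition IM_feasible :: "'a set \<Rightarrow> ('a \<Rightarrow> 'a \<Rightarrow> bool) \<Rightarrow> nat \<Rightarrow> ('a \<Rightarrow> int) \<Rightarrow> ('a \<Rightarrow> int)
    \<Rightarrow> ('a \<times> 'a \<Rightarrow> int) \<Rightarrow> int \<Rightarrow> bool" where
  "IM_feasible V E T s x y z \<longleftrightarrow>
     (\<forall>v \<in> V. s v \<in> {0, 1} \<and> x v \<in> {0..int T})
     \<and> (\<forall>a \<in> arcs V E. y a \<in> {0, 1}) \<and> z \<in> {0..int T}
     \<and> (\<forall>v \<in> V. s v + (\<Sum>a \<in> {a \<in> arcs V E. snd a = v}. y a) = 1)
     \<and> (\<forall>(u, v) \<in> arcs V E. x u - x v + (int T + 1) * y (u, v) \<le> int T)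
     \<and> (\<forall>(u, v) \<in> arcs V E. \<forall>w \<in> nbhd V E u - {v}.
           x w - x v + (int T + 1) * y (u, v) \<le> int T)
     \<and> (\<forall>v \<in> V. x v - z \<le> 0)"

end

theory Submission
  imports Defs
begin

lemma fs_mono: "S \<subseteq> force_step V E S"
  by (auto simp: force_step_def)

lemma iter_mono:
  assumes "t \<le> t'" shows "(force_step V E ^^ t) C \<subseteq> (force_step V E ^^ t') C"
proof -
  have "\<And>n. (force_step V E ^^ n) C \<subseteq> (force_step V E ^^ Suc n) C"
    by (simp add: fs_mono)
  then show ?thesis using assms by (rule lift_Suc_mono_le)
qed

lemma iter_sub:
  assumes "C \<subseteq> V" shows "(force_step V E ^^ t) C \<subseteq> V"
  using assms by (induction t) (auto simp: force_step_def)

lemma g0: "zf_game V E C Cs phi \<Longrightarrow> Cs 0 = C" unfolding zf_game_def by blast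
lemma gV: "zf_game V E C Cs phi \<Longrightarrow> Cs t \<subseteq> V" unfolding zf_game_def by blast
lemma gf: "zf_game V E C Cs phi \<Longrightarrow> t \<ge> 1 \<Longrightarrow> v \<in> Cs t \<Longrightarrow> \<exists>u. E u v \<and> u \<in> filled_upto Cs (t - 1)
               \<and> nbhd V E u - {v} \<subseteq> filled_upto Cs (t - 1)"
  unfolding zf_game_def by metis
lemma f0: "filled_upto Cs 0 = Cs 0" by (simp add: filled_upto_def)
lemma fS: "filled_upto Cs (Suc t) = filled_upto Cs t \<union> Cs (Suc t)"
    by (auto simp: filled_upto_def le_Suc_eq)

lemma filled_sub:
  assumes "zf_game V E C Cs phi"
  shows "filled_upto Cs t \<subseteq> (force_step V E ^^ t) C"
proof (induction t)
  case 0
  then show ?case using g0[OF assms] f0[of Cs] by simp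
next
  case (Suc t)
  let ?S = "(force_step V E ^^ t) C"
  have "Cs (Suc t) \<subseteq> force_step V E ?S"
  proof
    fix v assume v: "v \<in> Cs (Suc t)"
    obtain u where h: "E u v" "u \<in> filled_upto Cs t" "nbhd V E u - {v} \<subseteq> filled_upto Cs t"
      using gf[OF assms _ v] by auto
    have vV: "v \<in> V" using gV[OF assms] v by blast
    show "v \<in> force_step V E ?S"
    proof (cases "v \<in> ?S")
      case True then show ?thesis using fs_mono[of ?S V E] by blast
    next
      case False
      have s1: "nbhd V E u - {v} \<subseteq> ?S" by (rule order_trans[OF h(3) Suc.IH])
      have "v \<in> nbhd V E u" using h(1) vV by (simp add: nbhd_def)
      then have e: "nbhd V E u - ?S = {v}" using s1 False by blast
      have uS: "u \<in> ?S" by (rule subsetD[OF Suc.IH h(2)])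
      have "v \<in> {v \<in> V - ?S. \<exists>u \<in> ?S. E u v \<and> nbhd V E u - ?S = {v}}"
        using e uS h(1) vV False by blast
      then show ?thesis unfolding force_step_def by blast
    qed
  qed
  then show ?case using fS[of Cs t] Suc.IH fs_mono[of ?S V E] by auto
qed

theorem theorem3p2:
  fixes V :: "'a set" and E :: "'a \<Rightarrow> 'a \<Rightarrow> bool" and T :: nat
    and C :: "'a set" and Cs :: "nat \<Rightarrow> 'a set" and phi :: "('a \<times> 'a) set"
  assumes "simple_graph V E"
    and "T \<ge> 1"
    and "in_Z V E T C Cs phi"
  shows "\<exists>s x y z. IM_feasible V E T s x y z \<and> int (card C) = (\<Sum>v\<in>V. s v)
           \<and> pt V E C = enat (nat z) \<and> pt V E C \<le> enat T"
proof -
  define S where "S = (\<lambda>t. (force_step V E ^^ t) C)"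
  have game: "zf_game V E C Cs phi" and zfs: "zero_forcing_set V E C"
    and fT: "filled_upto Cs T = V" using assms(3) by (auto simp: in_Z_def)
  have CV: "C \<subseteq> V" using zfs by (simp add: zero_forcing_set_def)
  have finV: "finite V" using assms(1) by (simp add: simple_graph_def)
  have Ssub: "\<And>t. S t \<subseteq> V" using iter_sub[OF CV] by (simp add: S_def)
  have Smono: "\<And>t t'. t \<le> t' \<Longrightarrow> S t \<subseteq> S t'" using iter_mono by (simp add: S_def)
  have ST: "S T = V" using filled_sub[OF game, of T] fT Ssub by (auto simp: S_def)
  define p where "p = (LEAST t. S t = V)"
  have pT: "p \<le> T" using ST by (simp add: p_def Least_le)
  have Sp: "S p = V" using ST unfolding p_def by (rule LeastI)
  have ptp: "pt V E C = enat p" using zfs by (simp add: pt_def p_def S_def)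
  define xn where "xn = (\<lambda>v. LEAST t. v \<in> S t)"
  have xin: "\<And>v. v \<in> V \<Longrightarrow> v \<in> S (xn v)"
    using Sp unfolding xn_def by (metis LeastI)
  have xle: "\<And>v t. v \<in> S t \<Longrightarrow> xn v \<le> t" unfolding xn_def by (rule Least_le)
  have xp: "\<And>v. v \<in> V \<Longrightarrow> xn v \<le> p" using Sp xle by blast
  have forcer: "\<exists>u. u \<in> V \<and> E u v \<and> xn u < xn v \<and> (\<forall>w \<in> nbhd V E u - {v}. xn w < xn v)"
    if vV: "v \<in> V" and vC: "v \<notin> C" for v
  proof -
    define k where "k = xn v"
    have "k \<noteq> 0"
    proof
      assume "k = 0"
      then have "v \<in> S 0" using xin[OF vV] k_def by simp
      then show False using vC by (simp add: S_def)
    qed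
    then obtain j where kj: "k = Suc j" using not0_implies_Suc by blast
    have "v \<notin> S j" using xle[of v j] kj k_def by auto
    moreover have "v \<in> force_step V E (S j)" using xin[OF vV] kj k_def by (simp add: S_def)
    ultimately have "v \<in> {v \<in> V - S j. \<exists>u \<in> S j. E u v \<and> nbhd V E u - S j = {v}}"
      unfolding force_step_def by blast
    then obtain u where u: "u \<in> S j" "E u v" "nbhd V E u - S j = {v}"
      by blast
    have xv: "xn v = Suc j" using kj k_def by simp
    have A: "xn u < xn v" using xle[OF u(1)] xv by simp
    have B: "xn w < xn v" if w: "w \<in> nbhd V E u - {v}" for w
    proof -
      have "w \<in> S j" using w u(3) by blast
      then show ?thesis using xle[of w j] xv by simp
    qed
    have uV: "u \<in> V" using Ssub[of j] u(1) by blast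
    show ?thesis using uV u(2) A B by blast
  qed
  define f where "f = (\<lambda>v. SOME u. u \<in> V \<and> E u v \<and> xn u < xn v \<and> (\<forall>w \<in> nbhd V E u - {v}. xn w < xn v))"
  have fP: "f v \<in> V \<and> E (f v) v \<and> xn (f v) < xn v \<and> (\<forall>w \<in> nbhd V E (f v) - {v}. xn w < xn v)"
    if "v \<in> V" "v \<notin> C" for v
    unfolding f_def using someI_ex[OF forcer[OF that]] .
  define s :: "'a \<Rightarrow> int" where "s = (\<lambda>v. if v \<in> C then 1 else 0)"
  define x :: "'a \<Rightarrow> int" where "x = (\<lambda>v. int (xn v))"
  define y :: "'a \<times> 'a \<Rightarrow> int" where "y = (\<lambda>(u,v). if v \<notin> C \<and> u = f v then 1 else 0)"
  define z :: int where "z = int p"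
  have finA: "finite (arcs V E)"
    by (rule finite_subset[of _ "V \<times> V"]) (auto simp: arcs_def finV)
  have c1: "s v + (\<Sum>a \<in> {a \<in> arcs V E. snd a = v}. y a) = 1" if vV: "v \<in> V" for v
  proof (cases "v \<in> C")
    case True
    have "(\<Sum>a \<in> {a \<in> arcs V E. snd a = v}. y a) = 0"
      by (rule sum.neutral) (auto simp: y_def True)
    then show ?thesis by (simp add: s_def True)
  next
    case False
    have fin: "finite {a \<in> arcs V E. snd a = v}" using finA by simp
    have mem: "(f v, v) \<in> {a \<in> arcs V E. snd a = v}"
      using fP[OF vV False] vV by (simp add: arcs_def)
    have "(\<Sum>a \<in> {a \<in> arcs V E. snd a = v}. y a)
        = (\<Sum>a \<in> {a \<in> arcs V E. snd a = v}. if a = (f v, v) then 1 else 0)"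
      by (rule sum.cong) (auto simp: y_def False split: if_split_asm)
    also have "\<dots> = (if (f v, v) \<in> {a \<in> arcs V E. snd a = v} then 1 else 0)"
      by (rule sum.delta[OF fin])
    also have "\<dots> = 1" using mem by simp
    finally show ?thesis by (simp add: s_def False)
  qed
  have c2: "x u - x v + (int T + 1) * y (u, v) \<le> int T" if a: "(u, v) \<in> arcs V E" for u v
  proof (cases "v \<notin> C \<and> u = f v")
    case True
    then have "xn u < xn v" using fP[of v] a by (auto simp: arcs_def)
    moreover have "y (u, v) = 1" using True by (simp add: y_def)
    ultimately show ?thesis by (simp add: x_def)
  next
    case False
    have "xn u \<le> T" "xn v \<le> T" using xp[of u] xp[of v] pT a by (auto simp: arcs_def)
    moreover have "y (u, v) = 0" using False by (simp add: y_def)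
    ultimately show ?thesis by (simp add: x_def)
  qed
  have c3: "x w - x v + (int T + 1) * y (u, v) \<le> int T"
    if a: "(u, v) \<in> arcs V E" and w: "w \<in> nbhd V E u - {v}" for u v w
  proof (cases "v \<notin> C \<and> u = f v")
    case True
    then have "xn w < xn v" using fP[of v] a w by (auto simp: arcs_def)
    moreover have "y (u, v) = 1" using True by (simp add: y_def)
    ultimately show ?thesis by (simp add: x_def)
  next
    case False
    have "xn w \<le> T" "xn v \<le> T" using xp[of w] xp[of v] pT a w by (auto simp: arcs_def nbhd_def)
    moreover have "y (u, v) = 0" using False by (simp add: y_def)
    ultimately show ?thesis by (simp add: x_def)
  qed
  have feas: "IM_feasible V E T s x y z"
    unfolding IM_feasible_def
  proof (intro conjI)
    show "\<forall>v\<in>V. s v \<in> {0, 1} \<and> x v \<in> {0..int T}"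
      using xp pT by (auto simp: s_def x_def intro: le_trans[OF xp pT])
    show "\<forall>a\<in>arcs V E. y a \<in> {0, 1}" by (auto simp: y_def)
    show "z \<in> {0..int T}" using pT by (simp add: z_def)
    show "\<forall>v\<in>V. s v + (\<Sum>a \<in> {a \<in> arcs V E. snd a = v}. y a) = 1" using c1 by blast
    show "\<forall>(u, v)\<in>arcs V E. x u - x v + (int T + 1) * y (u, v) \<le> int T" using c2 by blast
    show "\<forall>(u, v)\<in>arcs V E. \<forall>w\<in>nbhd V E u - {v}. x w - x v + (int T + 1) * y (u, v) \<le> int T"
      using c3 by blast
    show "\<forall>v\<in>V. x v - z \<le> 0" using xp by (simp add: x_def z_def)
  qed
  have "(\<Sum>v\<in>V. s v) = int (card C)"
  proof -
    have "(\<Sum>v\<in>V. s v) = (\<Sum>v\<in>C. 1)"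
      unfolding s_def using finV CV by (simp add: sum.If_cases Int_absorb1)
    then show ?thesis by simp
  qed
  then show ?thesis using feas ptp pT by (intro exI[of _ s] exI[of _ x] exI[of _ y] exI[of _ z]) (simp add: z_def)
qed

end
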